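(* Let $L\ge1$ and $\alpha\in(\alpha_{L+1},\alpha_L)$. There exist positive constants $c_1,\dots,c_L$ (depending only on $\alpha$ and $L$) such that for all real numbers $d_1,\dots,d_L$ the system $AS(d_1,\dots,d_L)$ has a unique solution $(l_0,\dots,l_{L+2})$, and this solution satisfies $$d_{L+1}=-d_0(L)-\sum_{k=1}^Lc_kd_k,\qquad d_0=d_0(L)-\sum_{k=1}^Lc_{L+1-k}d_k,$$ where $d_0:=-l_1+\alpha l_2$ and $d_{L+1}:=-\alpha l_L+l_{L+1}$.
   Context: Define $\alpha_1:=+\infty$ and, for $L\ge2$, $\alpha_L:=\dfrac{1}{1+2\cos(\frac{2\pi}{L+2})}$. For real $d_1,\dots,d_L$, the system $AS(d_1,\dots,d_L)$ on the unknown $(l_0,\dots,l_{L+2})\in\mathbb{R}^{L+3}$ is: $l_0=l_{L+2}=0$; $d_j=-\alpha l_{j-1}+l_j-l_{j+1}+\alpha l_{j+2}$ for all $j\in\{1,\dots,L\}$; $\sum_{j=1}^{L+1}l_j=1$. The constant $d_0(L)$ is the value of $-l_1+\alpha l_2$ at the (unique) solution of $AS(0,\dots,0)$; explicitly, with $\omega\in(0,\pi)$ defined by $\cos\omega=\frac{1-\alpha}{2\alpha}$, $d_0(L)=-\alpha\sin(\frac{L+3}{2}\omega)\sin(\frac{\omega}{2})/\sum_{i=1}^{L+1}\sin(\frac{L+2-i}{2}\omega)\sin(\frac{i\omega}{2})$, and $d_0(L)>0$. *)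

theory Defs
  imports Complex_Main
begin

text \<open>alpha_L for L >= 2 (alpha_1 = +infinity is handled separately in the statement).\<close>
definition alphaL :: "nat \<Rightarrow> real" where
  "alphaL L = 1 / (1 + 2 * cos (2 * pi / real (L + 2)))"

text \<open>The system AS(d_1,...,d_L) for parameter alpha; unknowns l_0..l_{L+2}
  represented by a function l :: nat => real (only indices 0..L+2 matter).\<close>
definition AS :: "real \<Rightarrow> nat \<Rightarrow> (nat \<Rightarrow> real) \<Rightarrow> (nat \<Rightarrow> real) \<Rightarrow> bool" where
  "AS \<alpha> L d l \<longleftrightarrow>
     l 0 = 0 \<and> l (L + 2) = 0 \<and>
     (\<forall>j\<in>{1..L}. d j = - \<alpha> * l (j - 1) + l j - l (j + 1) + \<alpha> * l (j + 2)) \<and>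
     (\<Sum>j = 1..L + 1. l j) = 1"

definition d0L :: "real \<Rightarrow> nat \<Rightarrow> real" where
  "d0L \<alpha> L = (THE v. \<exists>l. AS \<alpha> L (\<lambda>_. 0) l \<and> v = - l 1 + \<alpha> * l 2)"

end

theory Submission
  imports Defs
begin

lemma two_sin_sin: "2*sin (y::real)*sin z = cos(z - y) - cos(z+y)"
  by (simp add: cos_diff cos_add)

lemma sin_tele:
  assumes "a \<le> b"
  shows "2*sin y*(\<Sum>j=a..<b. sin(c + 2*real j*y)) = cos(c + (2*real a - 1)*y) - cos(c + (2*real b - 1)*y)"
  using assms
proof (induction b rule: nat_induct_at_least)
  case base then show ?case by simp
next
  case (Suc b)
  have e1: "c + (2*real (Suc b) - 1)*y = (c + 2*real b*y) + y" by (simp add: algebra_simps)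
  have e2: "c + (2*real b - 1)*y = (c + 2*real b*y) - y" by (simp add: algebra_simps)
  have "2*sin y*sin(c + 2*real b*y) = cos(c + (2*real b - 1)*y) - cos(c + (2*real (Suc b) - 1)*y)"
    unfolding e1 e2 by (rule two_sin_sin)
  then show ?case using Suc by (simp add: distrib_left)
qed

lemma idA: "cos(2*u+(x::real)) + cos(x+2*e) - cos x - cos(x+2*e+2*u) = 4*sin u*sin e*cos(x+e+u)"
  using sin_cos_squared_add[of x] sin_cos_squared_add[of e] sin_cos_squared_add[of u]
  by (simp only: mult_2 sin_add cos_add) algebra

lemma idB: "cos (x::real) - cos(x+2*e+2*u) - cos(2*u+x) + cos(x+2*e) = 4*sin u*sin(x+e+u)*cos e"
  using sin_cos_squared_add[of x] sin_cos_squared_add[of e] sin_cos_squared_add[of u]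
  by (simp only: mult_2 sin_add cos_add) algebra

lemma idQ: "cos (x::real) - cos(x+2*e) = 2*sin(x+e)*sin e"
  using sin_cos_squared_add[of x] sin_cos_squared_add[of e]
  by (simp only: mult_2 sin_add cos_add) algebra

lemma idJ: "2*(sin((x::real)+e)*sin(2*x+e) - 2*sin e*sin x*cos(2*x+e)) = (cos x - cos(3*x)) + (cos x - cos(x+2*e))"
proof -
  have "3*x = x + x + x" by simp
  then show ?thesis
  using sin_cos_squared_add[of x] sin_cos_squared_add[of e]
  by (simp only: mult_2 sin_add cos_add) algebra
qed

lemma key_signs:
  fixes x e :: real
  assumes "0 < e" "e < x" "3*x < pi"
  shows "- sin(2*e) < 0" "(cos x - cos(x+2*e))/(2*sin x) > 0"
proof -
  have "sin (2*e) > 0" using assms by (intro sin_gt_zero) auto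
  then show "- sin(2*e) < 0" by simp
  have "sin x > 0" using assms by (intro sin_gt_zero) auto
  moreover have "cos (x+2*e) < cos x" using assms by (subst cos_mono_less_eq) auto
  ultimately show "(cos x - cos(x+2*e))/(2*sin x) > 0" by simp
qed

lemma key_pos:
  fixes x e u k n :: real
  assumes e0: "0 < e" and ex: "e < x" and xu: "x \<le> u" and upi: "u + 2*x + e \<le> pi" and x3: "3*x < pi"
    and k0: "0 \<le> k" and nk: "0 \<le> n - k"
  defines "sg \<equiv> - sin(2*e)" and "S1 \<equiv> (cos x - cos(x+2*e))/(2*sin x)"
    and "P \<equiv> (cos(2*u+x) - cos(x+2*e))/(2*sin x)" and "R \<equiv> (cos x - cos(x+2*e+2*u))/(2*sin x)"
  shows "k*sg*(sg+P) + (n-k)*sg*(P-S1) + (sg*(P+R-2*S1) + S1*(R-P)) > 0"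
proof -
  have sg: "sg < 0" and S1: "S1 > 0" using key_signs[OF e0 ex x3] unfolding sg_def S1_def by auto
  have sx: "sin x > 0" using assms by (intro sin_gt_zero) auto
  have "cos(2*u+x) < cos(x+2*e)"
  proof (cases "2*u+x \<le> pi")
    case True then show ?thesis using assms by (subst cos_mono_less_eq) auto
  next
    case False
    have "cos(2*u+x) = cos(2*pi - (2*u+x))" by simp
    also have "\<dots> < cos(x+2*e)" using assms False by (subst cos_mono_less_eq) auto
    finally show ?thesis .
  qed
  then have P: "P < 0" unfolding P_def using sx by (simp add: divide_neg_pos)
  have t1: "k*sg*(sg+P) \<ge> 0"
  proof -
    have "sg*(sg+P) > 0" using sg P by (intro mult_neg_neg) auto
    then show ?thesis using k0 by (simp add: mult.assoc)
  qed
  have t2: "(n-k)*sg*(P-S1) \<ge> 0"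
  proof -
    have "sg*(P-S1) > 0" using sg P S1 by (intro mult_neg_neg) auto
    then show ?thesis using nk by (simp add: mult.assoc)
  qed
  define w where "w = x+e+u"
  define J where "J = sin(x+e)*sin w - 2*sin e*sin x*cos w"
  have hA: "P+R-2*S1 = 4*sin u*sin e*cos w/(2*sin x)"
  proof -
    have "P+R-2*S1 = (cos(2*u+x) + cos(x+2*e) - cos x - cos(x+2*e+2*u))/(2*sin x)"
      unfolding P_def R_def S1_def using sx by (simp add: field_simps)
    then show ?thesis unfolding idA w_def .
  qed
  have hB: "R-P = 4*sin u*sin w*cos e/(2*sin x)"
  proof -
    have "R-P = (cos x - cos(x+2*e+2*u) - cos(2*u+x) + cos(x+2*e))/(2*sin x)"
      unfolding P_def R_def using sx by (simp add: field_simps)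
    then show ?thesis unfolding idB w_def .
  qed
  have hQ: "S1 = 2*sin(x+e)*sin e/(2*sin x)" unfolding S1_def idQ ..
  have hsg: "sg = -(2*sin e*cos e)" unfolding sg_def sin_double ..
  have C0: "sg*(P+R-2*S1) + S1*(R-P) = 8*sin e*cos e*sin u*J/(2*sin x)^2"
  proof -
    have "sg*(P+R-2*S1) + S1*(R-P) = sg*(4*sin u*sin e*cos w/(2*sin x)) + S1*(4*sin u*sin w*cos e/(2*sin x))"
      unfolding hA hB ..
    also have "\<dots> = -(2*sin e*cos e)*(4*sin u*sin e*cos w/(2*sin x)) + (2*sin(x+e)*sin e/(2*sin x))*(4*sin u*sin w*cos e/(2*sin x))"
      unfolding hQ hsg ..
    also have "\<dots> = 8*sin e*cos e*sin u*J/(2*sin x)^2"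
      unfolding J_def using sx by (simp add: field_simps power2_eq_square)
    finally show ?thesis .
  qed
  have su: "sin u > 0" using assms by (intro sin_gt_zero) auto
  have se: "sin e > 0" using assms by (intro sin_gt_zero) auto
  have ce: "cos e > 0" using assms by (intro cos_gt_zero) auto
  have sxe: "sin (x+e) > 0" using assms by (intro sin_gt_zero) auto
  have sw: "sin w > 0" using assms unfolding w_def by (intro sin_gt_zero) auto
  have cw: "cos w \<le> cos (2*x+e)" using assms unfolding w_def by (subst cos_mono_le_eq) auto
  have J0: "sin(x+e)*sin(2*x+e) - 2*sin e*sin x*cos(2*x+e) > 0"
  proof -
    have "cos (3*x) < cos x" using assms by (subst cos_mono_less_eq) auto
    moreover have "cos (x+2*e) < cos x" using assms by (subst cos_mono_less_eq) auto
    ultimately show ?thesis using idJ[of x e] by argo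
  qed
  have J: "J > 0"
  proof (cases "cos w \<le> 0")
    case True
    have "2*sin e*sin x*cos w \<le> 0" using True se sx
      by (simp add: mult_nonneg_nonpos)
    moreover have "sin(x+e)*sin w > 0" using sxe sw by simp
    ultimately show ?thesis unfolding J_def by linarith
  next
    case False
    have "w \<le> pi/2"
    proof (rule ccontr)
      assume "\<not> w \<le> pi/2"
      then have "cos w \<le> cos (pi/2)" using assms unfolding w_def by (subst cos_mono_le_eq) auto
      then show False using False by simp
    qed
    then have "sin (2*x+e) \<le> sin w" using assms unfolding w_def by (subst sin_mono_le_eq) auto
    then have "sin(x+e)*sin(2*x+e) \<le> sin(x+e)*sin w" using sxe by (intro mult_left_mono) auto
    moreover have "2*sin e*sin x*cos w \<le> 2*sin e*sin x*cos(2*x+e)" using cw se sx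
      by (intro mult_left_mono) auto
    ultimately show ?thesis using J0 unfolding J_def by linarith
  qed
  have "sg*(P+R-2*S1) + S1*(R-P) > 0" unfolding C0 using se ce su J sx by simp
  then show ?thesis using t1 t2 by linarith
qed

definition HS :: "real \<Rightarrow> nat \<Rightarrow> (nat \<Rightarrow> real) \<Rightarrow> real \<Rightarrow> (nat \<Rightarrow> real) \<Rightarrow> bool" where
  "HS \<alpha> L d s l \<longleftrightarrow> l 0 = 0 \<and> l (L + 2) = 0 \<and>
     (\<forall>j\<in>{1..L}. d j = - \<alpha> * l (j - 1) + l j - l (j + 1) + \<alpha> * l (j + 2)) \<and>
     (\<Sum>j = 1..L + 1. l j) = s"

lemma AS_HS: "AS \<alpha> L d l = HS \<alpha> L d 1 l" by (simp add: AS_def HS_def)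

lemma HS_lin:
  assumes "HS \<alpha> L d1 s1 l1" "HS \<alpha> L d2 s2 l2"
  shows "HS \<alpha> L (\<lambda>j. a*d1 j + b*d2 j) (a*s1+b*s2) (\<lambda>j. a*l1 j + b*l2 j)"
proof -
  have e1: "\<forall>j\<in>{1..L}. d1 j = - \<alpha> * l1 (j - 1) + l1 j - l1 (j + 1) + \<alpha> * l1 (j + 2)"
   and e2: "\<forall>j\<in>{1..L}. d2 j = - \<alpha> * l2 (j - 1) + l2 j - l2 (j + 1) + \<alpha> * l2 (j + 2)"
    using assms unfolding HS_def by auto
  have "a*d1 j + b*d2 j = - \<alpha> * (a*l1 (j - 1) + b*l2 (j-1)) + (a*l1 j + b*l2 j) - (a*l1 (j + 1) + b*l2 (j+1)) + \<alpha> * (a*l1 (j + 2) + b*l2 (j+2))"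
    if "j \<in> {1..L}" for j
    unfolding e1[rule_format, OF that] e2[rule_format, OF that] by (simp add: algebra_simps)
  then show ?thesis using assms unfolding HS_def
    by (auto simp: sum.distrib sum_distrib_left[symmetric])
qed

lemma HS_sum:
  assumes "finite K" "\<forall>k\<in>K. HS \<alpha> L (D k) (S k) (U k)"
  shows "HS \<alpha> L (\<lambda>j. \<Sum>k\<in>K. D k j) (\<Sum>k\<in>K. S k) (\<lambda>j. \<Sum>k\<in>K. U k j)"
  using assms
proof (induction K rule: finite_induct)
  case empty then show ?case by (simp add: HS_def)
next
  case (insert k K)
  then have "HS \<alpha> L (\<lambda>j. 1*D k j + 1*(\<Sum>k\<in>K. D k j)) (1*S k + 1*(\<Sum>k\<in>K. S k)) (\<lambda>j. 1*U k j + 1*(\<Sum>k\<in>K. U k j))"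
    by (intro HS_lin) auto
  then show ?case using insert by simp
qed

lemma HS_cong:
  assumes "HS \<alpha> L d s l" "\<forall>j\<in>{1..L}. d j = d' j"
  shows "HS \<alpha> L d' s l"
  using assms unfolding HS_def by auto

lemma HS_rev:
  assumes "HS \<alpha> L d s l"
  shows "HS \<alpha> L (\<lambda>j. - d (L + 1 - j)) s (\<lambda>j. l (L + 2 - j))"
proof -
  have eq: "\<forall>j\<in>{1..L}. d j = - \<alpha> * l (j - 1) + l j - l (j + 1) + \<alpha> * l (j + 2)"
    and s: "(\<Sum>j = 1..L + 1. l j) = s" and b: "l 0 = 0" "l (L+2) = 0" using assms unfolding HS_def by auto
  have "- d (L + 1 - j) = - \<alpha> * l (L + 2 - (j - 1)) + l (L + 2 - j) - l (L + 2 - (j + 1)) + \<alpha> * l (L + 2 - (j + 2))"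
    if j: "j \<in> {1..L}" for j
  proof -
    define i where "i = L + 1 - j"
    have i: "i \<in> {1..L}" using j unfolding i_def by auto
    have "L + 2 - (j - 1) = i + 2" "L + 2 - j = i + 1" "L + 2 - (j + 1) = i" "L + 2 - (j + 2) = i - 1"
      using j unfolding i_def by auto
    then show ?thesis using eq i unfolding i_def[symmetric] by auto
  qed
  moreover have "(\<Sum>j = 1..L + 1. l (L + 2 - j)) = s"
    using s sum.atLeastAtMost_rev[of l 1 "L+1"] by simp
  ultimately show ?thesis using b unfolding HS_def by auto
qed

lemma sbp:
  fixes l \<phi> :: "nat \<Rightarrow> real" and n :: nat
  shows "(\<Sum>j=1..n. (\<alpha>*l(j+1) + (\<alpha>-1)*l j + \<alpha>*l(j-1)) * \<phi> j) =
   (\<Sum>j=1..n. l j * (\<alpha>*\<phi>(j+1) + (\<alpha>-1)*\<phi> j + \<alpha>*\<phi>(j-1))) + \<alpha>*(l(n+1)*\<phi> n - l n*\<phi>(n+1)) + \<alpha>*(l 0*\<phi> 1 - l 1*\<phi> 0)"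
proof (induction n)
  case 0 then show ?case by (simp add: algebra_simps)
next
  case (Suc n) then show ?case by (simp add: algebra_simps)
qed

lemma Qsin: "\<alpha>*(1+2*cos y) = (1::real) \<Longrightarrow> \<alpha>*sin(t + y) + (\<alpha>-1)*sin t + \<alpha>*sin(t - y) = 0"
proof -
  assume a: "\<alpha>*(1+2*cos y) = 1"
  have "\<alpha>*sin(t + y) + (\<alpha>-1)*sin t + \<alpha>*sin(t - y) = sin t*(\<alpha>*(1+2*cos y) - 1)"
    by (simp add: sin_add sin_diff algebra_simps)
  then show ?thesis using a by simp
qed

lemma three_ids:
  fixes \<alpha> x :: real and L :: nat and l d :: "nat \<Rightarrow> real"
  assumes hs: "HS \<alpha> L d s l" and a: "\<alpha>*(1+2*cos(2*x)) = 1"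
  defines "m \<equiv> \<lambda>j. \<alpha>*l(j+1) + (\<alpha>-1)*l j + \<alpha>*l(j-1)"
  shows "(\<Sum>j=1..L+1. m j * sin(2*real j*x)) = -\<alpha>*l(L+1)*sin(2*real(L+2)*x)"
    and "(\<Sum>j=1..L+1. m j * sin(2*real(L+2)*x - 2*real j*x)) = -\<alpha>*l 1*sin(2*real(L+2)*x)"
    and "(\<Sum>j=1..L+1. m j) = (3*\<alpha>-1)*s - \<alpha>*l(L+1) - \<alpha>*l 1"
proof -
  have b0: "l 0 = 0" and bN: "l (L+2) = 0" and sm: "(\<Sum>j = 1..L + 1. l j) = s"
    using hs unfolding HS_def by auto
  {
    fix \<phi> :: "nat \<Rightarrow> real"
    have "(\<Sum>j=1..L+1. m j * \<phi> j) = (\<Sum>j=1..L+1. l j * (\<alpha>*\<phi>(j+1) + (\<alpha>-1)*\<phi> j + \<alpha>*\<phi>(j-1))) + \<alpha>*(l(L+2)*\<phi> (L+1) - l (L+1)*\<phi>(L+2)) + \<alpha>*(l 0*\<phi> 1 - l 1*\<phi> 0)"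
      unfolding m_def using sbp[of \<alpha> l \<phi> "L+1"] by (simp add: add.assoc)
    then have "(\<Sum>j=1..L+1. m j * \<phi> j) = (\<Sum>j=1..L+1. l j * (\<alpha>*\<phi>(j+1) + (\<alpha>-1)*\<phi> j + \<alpha>*\<phi>(j-1))) - \<alpha>*l (L+1)*\<phi>(L+2) - \<alpha>*l 1*\<phi> 0"
      using b0 bN by (simp add: algebra_simps)
  } note gen = this
  have q1: "\<alpha>*sin(2*real (j+1)*x) + (\<alpha>-1)*sin(2*real j*x) + \<alpha>*sin(2*real (j-1)*x) = 0" if "j \<in> {1..L+1}" for j
  proof -
    have "2*real (j+1)*x = 2*real j*x + 2*x" "2*real (j-1)*x = 2*real j*x - 2*x"
      using that by (auto simp: of_nat_diff algebra_simps)
    then show ?thesis using Qsin[OF a, of "2*real j*x"] by simp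
  qed
  have z1: "(\<Sum>j=1..L+1. l j * (\<alpha>*sin(2*real (j+1)*x) + (\<alpha>-1)*sin(2*real j*x) + \<alpha>*sin(2*real (j-1)*x))) = 0"
    by (intro sum.neutral ballI) (simp only: q1 mult_zero_right)
  show "(\<Sum>j=1..L+1. m j * sin(2*real j*x)) = -\<alpha>*l(L+1)*sin(2*real(L+2)*x)"
    unfolding gen[of "\<lambda>j. sin(2*real j*x)"] z1 by simp
  have q2: "\<alpha>*sin(2*real(L+2)*x - 2*real (j+1)*x) + (\<alpha>-1)*sin(2*real(L+2)*x - 2*real j*x) + \<alpha>*sin(2*real(L+2)*x - 2*real (j-1)*x) = 0" if "j \<in> {1..L+1}" for j
  proof -
    have "2*real(L+2)*x - 2*real (j+1)*x = (2*real(L+2)*x - 2*real j*x) - 2*x"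
      "2*real(L+2)*x - 2*real (j-1)*x = (2*real(L+2)*x - 2*real j*x) + 2*x"
      using that by (auto simp: of_nat_diff algebra_simps)
    then show ?thesis using Qsin[OF a, of "2*real(L+2)*x - 2*real j*x"] by (simp add: algebra_simps)
  qed
  have z2: "(\<Sum>j=1..L+1. l j * (\<alpha>*sin(2*real(L+2)*x - 2*real (j+1)*x) + (\<alpha>-1)*sin(2*real(L+2)*x - 2*real j*x) + \<alpha>*sin(2*real(L+2)*x - 2*real (j-1)*x))) = 0"
    by (intro sum.neutral ballI) (simp only: q2 mult_zero_right)
  show "(\<Sum>j=1..L+1. m j * sin(2*real(L+2)*x - 2*real j*x)) = -\<alpha>*l 1*sin(2*real(L+2)*x)"
    unfolding gen[of "\<lambda>j. sin(2*real(L+2)*x - 2*real j*x)"] z2 by simp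
  have "(\<Sum>j=1..L+1. l j * (\<alpha>*1 + (\<alpha>-1)*1 + \<alpha>*1)) = (3*\<alpha>-1)*s"
    by (simp only: sum_distrib_right[symmetric] sm) (simp add: algebra_simps)
  then show "(\<Sum>j=1..L+1. m j) = (3*\<alpha>-1)*s - \<alpha>*l(L+1) - \<alpha>*l 1"
    using gen[of "\<lambda>j. 1"] by (simp only: mult_1_right)
qed

lemma sumA:
  fixes x :: real
  assumes "k \<le> L+1"
  shows "2*sin x*(\<Sum>j=k+1..L+1. sin(2*real j*x)) = cos((2*real k+1)*x) - cos(x + 2*(pi - real(L+2)*x))"
proof -
  have st: "{k+1..<L+2} = {k+1..L+1}" by auto
  have t: "2*sin x*(\<Sum>j=k+1..<L+2. sin(0 + 2*real j*x)) = cos(0 + (2*real (k+1) - 1)*x) - cos(0 + (2*real (L+2) - 1)*x)"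
    using assms by (intro sin_tele) auto
  have a1: "0 + (2*real (k+1) - 1)*x = (2*real k+1)*x" by (simp add: algebra_simps)
  have a2: "x + 2*(pi - real(L+2)*x) = 2*pi - (0 + (2*real (L+2) - 1)*x)" by (simp add: algebra_simps)
  have "cos(x + 2*(pi - real(L+2)*x)) = cos(0 + (2*real (L+2) - 1)*x)" by (simp only: a2 cos_2pi_minus)
  then show ?thesis using t unfolding st a1 by (simp only: add_0_left)
qed

lemma sumB:
  fixes x :: real
  assumes "k \<le> L+1"
  shows "2*sin x*(\<Sum>j=k+1..L+1. sin(2*real(L+2)*x - 2*real j*x)) = cos x - cos(x + 2*(pi - real(L+2)*x) + 2*real k*x)"
proof -
  have st: "{k+1..<L+2} = {k+1..L+1}" by auto
  have t: "2*sin (-x)*(\<Sum>j=k+1..<L+2. sin(2*real(L+2)*x + 2*real j*(-x))) = cos(2*real(L+2)*x + (2*real (k+1) - 1)*(-x)) - cos(2*real(L+2)*x + (2*real (L+2) - 1)*(-x))"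
    using assms by (intro sin_tele) auto
  have a1: "x + 2*(pi - real(L+2)*x) + 2*real k*x = 2*pi - (2*real(L+2)*x + (2*real (k+1) - 1)*(-x))" by (simp add: algebra_simps)
  have a2: "2*real(L+2)*x + (2*real (L+2) - 1)*(-x) = x" by (simp add: algebra_simps)
  have a3: "\<And>j. 2*real(L+2)*x + 2*real j*(-x) = 2*real(L+2)*x - 2*real j*x" by simp
  have "cos(x + 2*(pi - real(L+2)*x) + 2*real k*x) = cos(2*real(L+2)*x + (2*real (k+1) - 1)*(-x))" by (simp only: a1 cos_2pi_minus)
  then show ?thesis using t unfolding st a2 a3 sin_minus by (simp only: mult_minus_left mult_minus_right minus_diff_eq)
qed

lemma msum:
  fixes m \<phi> :: "nat \<Rightarrow> real"
  assumes "\<forall>j\<in>{1..L+1}. m j = \<mu> + (if k < j then 1 else 0)" "k \<le> L+1"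
  shows "(\<Sum>j=1..L+1. m j * \<phi> j) = \<mu> * (\<Sum>j=1..L+1. \<phi> j) + (\<Sum>j=k+1..L+1. \<phi> j)"
proof -
  have "(\<Sum>j=1..L+1. m j * \<phi> j) = (\<Sum>j=1..L+1. \<mu> * \<phi> j + (if k < j then \<phi> j else 0))"
    using assms(1) by (intro sum.cong) (auto simp: algebra_simps)
  also have "\<dots> = \<mu> * (\<Sum>j=1..L+1. \<phi> j) + (\<Sum>j=1..L+1. (if k < j then \<phi> j else 0))"
    by (simp only: sum.distrib sum_distrib_left)
  also have "(\<Sum>j=1..L+1. (if k < j then \<phi> j else 0)) = (\<Sum>j=k+1..L+1. \<phi> j)"
  proof -
    have "(\<Sum>j=1..L+1. (if k < j then \<phi> j else 0)) = sum \<phi> ({1..L+1} \<inter> {j. k < j})"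
      by (simp add: sum.inter_restrict)
    also have "{1..L+1} \<inter> {j. k < j} = {k+1..L+1}" by auto
    finally show ?thesis .
  qed
  finally show ?thesis .
qed

lemma core_eqs:
  fixes \<alpha> x :: real and L k :: nat and l :: "nat \<Rightarrow> real"
  assumes a: "\<alpha>*(1+2*cos(2*x)) = 1"
    and hs: "HS \<alpha> L (\<lambda>j. if j = k then 1 else 0) 0 l" and k1: "1 \<le> k" and kL: "k \<le> L+1"
    and sx: "sin x \<noteq> 0"
    and e_def: "e = pi - real(L+2)*x"
    and sg_def: "sg = - sin(2*e)" and S1_def: "S1 = (cos x - cos(x+2*e))/(2*sin x)"
    and P_def: "P = (cos(2*(real k*x)+x) - cos(x+2*e))/(2*sin x)" and R_def: "R = (cos x - cos(x+2*e+2*(real k*x)))/(2*sin x)"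
    and \<mu>_def: "\<mu> = \<alpha>*l(1+1) + (\<alpha>-1)*l 1 + \<alpha>*l(1-1)"
  shows "\<mu>*S1 + P = -(\<alpha>*l(L+1))*sg" "\<mu>*S1 + R = -(\<alpha>*l 1)*sg"
    "(real L+1)*\<mu> + (real L + 1 - real k) = -(\<alpha>*l 1) - \<alpha>*l(L+1)"
    "\<alpha>*l(L+1+1) + (\<alpha>-1)*l(L+1) + \<alpha>*l(L+1-1) = \<mu> + (if k \<le> L then 1 else 0)"
proof -
  define m where "m = (\<lambda>j. \<alpha>*l(j+1) + (\<alpha>-1)*l j + \<alpha>*l(j-1))"
  have eq: "\<forall>j\<in>{1..L}. (if j = k then 1 else 0) = - \<alpha> * l (j - 1) + l j - l (j + 1) + \<alpha> * l (j + 2)"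
    using hs unfolding HS_def by auto
  have dm: "m (j+1) - m j = (if j = k then 1 else 0)" if "j \<in> {1..L}" for j
    using eq[rule_format, OF that] that unfolding m_def by (auto simp: algebra_simps)
  have mj: "j \<in> {1..L+1} \<longrightarrow> m j = \<mu> + (if k < j then 1 else 0)" for j
  proof (induction j)
    case 0 then show ?case by simp
  next
    case (Suc j)
    show ?case
    proof (cases "j = 0")
      case True then show ?thesis using k1 unfolding m_def \<mu>_def by auto
    next
      case False
      show ?thesis
      proof
        assume "Suc j \<in> {1..L+1}"
        then have j: "j \<in> {1..L}" using False by auto
        then have "m j = \<mu> + (if k < j then 1 else 0)" using Suc by auto
        then show "m (Suc j) = \<mu> + (if k < Suc j then 1 else 0)" using dm[OF j] by (cases "k < j"; cases "j = k") auto
      qed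
    qed
  qed
  then have mj': "\<forall>j\<in>{1..L+1}. m j = \<mu> + (if k < j then 1 else 0)" by blast
  have ids1: "(\<Sum>j=1..L+1. m j * sin(2*real j*x)) = -\<alpha>*l(L+1)*sin(2*real(L+2)*x)"
    and ids2: "(\<Sum>j=1..L+1. m j * sin(2*real(L+2)*x - 2*real j*x)) = -\<alpha>*l 1*sin(2*real(L+2)*x)"
    and ids3: "(\<Sum>j=1..L+1. m j) = (3*\<alpha>-1)*0 - \<alpha>*l(L+1) - \<alpha>*l 1"
    using three_ids[OF hs a] unfolding m_def by auto
  have sgv: "sin(2*real(L+2)*x) = sg"
  proof -
    have "2*real(L+2)*x = 2*pi - 2*e" unfolding e_def by (simp add: algebra_simps)
    then show ?thesis unfolding sg_def by (simp add: sin_diff)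
  qed
  have SA: "(\<Sum>j=1..L+1. sin(2*real j*x)) = S1"
    using sumA[of 0 L x] sx unfolding S1_def e_def by (simp add: field_simps)
  have PA: "(\<Sum>j=k+1..L+1. sin(2*real j*x)) = P"
  proof -
    have "(2*real k+1)*x = 2*(real k*x)+x" by (simp add: algebra_simps)
    then show ?thesis using sumA[of k L x] kL sx unfolding P_def e_def by (simp add: field_simps)
  qed
  have SB: "(\<Sum>j=1..L+1. sin(2*real(L+2)*x - 2*real j*x)) = S1"
    using sumB[of 0 L x] sx unfolding S1_def e_def by (simp add: field_simps)
  have RB: "(\<Sum>j=k+1..L+1. sin(2*real(L+2)*x - 2*real j*x)) = R"
    using sumB[of k L x] kL sx unfolding R_def e_def by (simp add: field_simps)
  show "\<mu>*S1 + P = -(\<alpha>*l(L+1))*sg"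
    using ids1 msum[OF mj' kL, of "\<lambda>j. sin(2*real j*x)"] unfolding SA PA sgv by simp
  show "\<mu>*S1 + R = -(\<alpha>*l 1)*sg"
    using ids2 msum[OF mj' kL, of "\<lambda>j. sin(2*real(L+2)*x - 2*real j*x)"] unfolding SB RB sgv by simp
  have c1: "(\<Sum>j=1..L+1. (1::real)) = real L + 1" by simp
  have c2: "(\<Sum>j=k+1..L+1. (1::real)) = real L + 1 - real k" using kL by (simp add: of_nat_diff)
  show "(real L+1)*\<mu> + (real L + 1 - real k) = -(\<alpha>*l 1) - \<alpha>*l(L+1)"
    using ids3 msum[OF mj' kL, of "\<lambda>j. 1"] unfolding c1 c2 by (simp add: algebra_simps)
  have "m (L+1) = \<mu> + (if k \<le> L then 1 else 0)" using mj' by auto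
  then show "\<alpha>*l(L+1+1) + (\<alpha>-1)*l(L+1) + \<alpha>*l(L+1-1) = \<mu> + (if k \<le> L then 1 else 0)"
    unfolding m_def by simp
qed

lemma par_facts:
  fixes \<alpha> x :: real and L :: nat
  assumes L1: "L \<ge> 1" and a: "\<alpha>*(1+2*cos(2*x)) = 1" and x1: "pi/real(L+3) < x" and x2: "x < pi/real(L+2)"
  shows "0 < pi - real(L+2)*x" "pi - real(L+2)*x < x" "3*x < pi" "0 < x" "sin x > 0" "\<alpha> \<noteq> 0"
proof -
  have "pi/real(L+3) > 0" by simp
  then have xp: "0 < x" using x1 by linarith
  then show "0 < x" .
  have "real(L+2)*x < pi" using x2 by (simp add: field_simps)
  then show e0: "0 < pi - real(L+2)*x" by simp
  have "pi < real(L+3)*x" using x1 by (simp add: field_simps)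
  then show "pi - real(L+2)*x < x" by (simp add: algebra_simps)
  have "3*x \<le> real(L+2)*x" using L1 xp by (intro mult_right_mono) auto
  then show x3: "3*x < pi" using e0 by simp
  show "sin x > 0" using xp x3 by (intro sin_gt_zero) auto
  show "\<alpha> \<noteq> 0" using a by auto
qed

lemma uniq0:
  fixes \<alpha> x :: real and L :: nat
  assumes L1: "L \<ge> 1" and a: "\<alpha>*(1+2*cos(2*x)) = 1" and x1: "pi/real(L+3) < x" and x2: "x < pi/real(L+2)"
    and hs: "HS \<alpha> L (\<lambda>_. 0) 0 l"
  shows "\<forall>j\<le>L+2. l j = 0"
proof -
  note pf = par_facts[OF L1 a x1 x2]
  define e where "e = pi - real(L+2)*x"
  have hs': "HS \<alpha> L (\<lambda>j. if j = L+1 then 1 else 0) 0 l" using hs by (rule HS_cong) auto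
  define sg where "sg = - sin(2*e)"
  define S1 where "S1 = (cos x - cos(x+2*e))/(2*sin x)"
  define P where "P = (cos(2*(real (L+1)*x)+x) - cos(x+2*e))/(2*sin x)"
  define R where "R = (cos x - cos(x+2*e+2*(real (L+1)*x)))/(2*sin x)"
  define \<mu> where "\<mu> = \<alpha>*l(1+1) + (\<alpha>-1)*l 1 + \<alpha>*l(1-1)"
  have sx: "sin x \<noteq> 0" using pf by simp
  note ce = core_eqs[OF a hs' _ _ sx e_def sg_def S1_def P_def R_def \<mu>_def]
  have P0: "P = 0"
  proof -
    have "x + 2*e = 2*pi - (2*(real (L+1)*x)+x)" unfolding e_def by (simp add: algebra_simps)
    then have "cos(x + 2*e) = cos (2*(real (L+1)*x)+x)" by (simp only: cos_2pi_minus)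
    then show ?thesis unfolding P_def by simp
  qed
  have R0: "R = 0"
  proof -
    have "x+2*e+2*(real (L+1)*x) = 2*pi - x" unfolding e_def by (simp add: algebra_simps)
    then have "cos(x+2*e+2*(real (L+1)*x)) = cos x" by (simp only: cos_2pi_minus)
    then show ?thesis unfolding R_def by simp
  qed
  have e1: "\<mu>*S1 = -(\<alpha>*l(L+1))*sg" and e2: "\<mu>*S1 = -(\<alpha>*l 1)*sg"
    and e3: "(real L+1)*\<mu> = -(\<alpha>*l 1) - \<alpha>*l(L+1)"
    using ce P0 R0 by auto
  have sg0: "sg < 0" and S10: "S1 > 0" using key_signs[of e x] pf unfolding sg_def S1_def e_def by auto
  have "\<mu>*((real L+1)*sg - 2*S1) = 0"
  proof -
    have "(real L+1)*\<mu>*sg = -(\<alpha>*l 1)*sg - (\<alpha>*l(L+1))*sg" using e3 by algebra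
    then show ?thesis using e1 e2 by algebra
  qed
  moreover have "(real L+1)*sg - 2*S1 < 0" using sg0 S10 by (smt (verit) mult_nonneg_nonpos of_nat_0_le_iff)
  ultimately have mu0: "\<mu> = 0" by simp
  then have "\<alpha>*l 1 = 0" using e2 sg0 by simp
  then have l1: "l 1 = 0" using pf by simp
  have l0: "l 0 = 0" and eq: "\<forall>j\<in>{1..L}. 0 = - \<alpha> * l (j - 1) + l j - l (j + 1) + \<alpha> * l (j + 2)"
    using hs unfolding HS_def by auto
  have l2: "l 2 = 0" using mu0 l1 l0 pf unfolding \<mu>_def by (simp add: numeral_2_eq_2)
  have "j \<le> L+2 \<longrightarrow> l j = 0" for j
  proof (induction j rule: less_induct)
    case (less j)
    show ?case
    proof (cases "j \<le> 2")
      case True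
      then have "j = 0 \<or> j = 1 \<or> j = 2" by auto
      then show ?thesis using l0 l1 l2 by auto
    next
      case False
      define i where "i = j - 2"
      show ?thesis
      proof
        assume jL: "j \<le> L+2"
        have i: "i \<in> {1..L}" using False jL unfolding i_def by auto
        have ij: "j = i + 2" "i - 1 < j" "i < j" "i + 1 < j" using False unfolding i_def by auto
        have "l (i-1) = 0" "l i = 0" "l (i+1) = 0" using less ij jL by auto
        then have "\<alpha> * l (i+2) = 0" using eq[rule_format, OF i] by simp
        then show "l j = 0" using pf ij by simp
      qed
    qed
  qed
  then show ?thesis by auto
qed

lemma cpos:
  fixes \<alpha> x :: real and L k :: nat
  assumes L1: "L \<ge> 1" and a: "\<alpha>*(1+2*cos(2*x)) = 1" and x1: "pi/real(L+3) < x" and x2: "x < pi/real(L+2)"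
    and hs: "HS \<alpha> L (\<lambda>j. if j = k then 1 else 0) 0 l" and k: "k \<in> {1..L}"
  shows "\<alpha>*l L - l(L+1) > 0"
proof -
  note pf = par_facts[OF L1 a x1 x2]
  define e where "e = pi - real(L+2)*x"
  define sg where "sg = - sin(2*e)"
  define S1 where "S1 = (cos x - cos(x+2*e))/(2*sin x)"
  define P where "P = (cos(2*(real k*x)+x) - cos(x+2*e))/(2*sin x)"
  define R where "R = (cos x - cos(x+2*e+2*(real k*x)))/(2*sin x)"
  define \<mu> where "\<mu> = \<alpha>*l(1+1) + (\<alpha>-1)*l 1 + \<alpha>*l(1-1)"
  have sx: "sin x \<noteq> 0" using pf by simp
  have k1: "1 \<le> k" and kL: "k \<le> L+1" and kL': "k \<le> L" using k by auto
  note ce = core_eqs[OF a hs k1 kL sx e_def sg_def S1_def P_def R_def \<mu>_def]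
  have lN: "l (L+2) = 0" using hs unfolding HS_def by auto
  define A where "A = \<alpha>*l 1"
  define B where "B = \<alpha>*l (L+1)"
  define n where "n = real L + 1"
  define kk where "kk = real k"
  define c where "c = \<alpha>*l L - l(L+1)"
  have e1: "\<mu>*S1 + P = -B*sg" and e2: "\<mu>*S1 + R = -A*sg" and e3: "n*\<mu> + (n - kk) = -A - B"
    using ce unfolding A_def B_def n_def kk_def by auto
  have cv: "c = \<mu> + 1 - B" using ce(4) kL' lN unfolding c_def B_def by (simp add: algebra_simps)
  have h1: "c*sg = \<mu>*(sg+S1) + sg + P" using cv e1 by algebra
  have h2: "\<mu>*(n*sg - 2*S1) = P + R - (n-kk)*sg"
  proof -
    have "n*\<mu>*sg + (n-kk)*sg = -A*sg - B*sg" using e3 by algebra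
    then show ?thesis using e1 e2 by algebra
  qed
  have X: "c*sg*(n*sg - 2*S1) = kk*sg*(sg+P) + (n-kk)*sg*(P-S1) + (sg*(P+R-2*S1) + S1*(R-P))"
  proof -
    have "c*sg*(n*sg - 2*S1) = (\<mu>*(n*sg - 2*S1))*(sg+S1) + (sg+P)*(n*sg - 2*S1)"
      unfolding h1 by (simp add: algebra_simps)
    also have "\<dots> = (P + R - (n-kk)*sg)*(sg+S1) + (sg+P)*(n*sg - 2*S1)" unfolding h2 ..
    also have "\<dots> = kk*sg*(sg+P) + (n-kk)*sg*(P-S1) + (sg*(P+R-2*S1) + S1*(R-P))"
      by (simp add: algebra_simps)
    finally show ?thesis .
  qed
  have kx: "x \<le> real k * x" using k1 pf by simp
  have ku: "real k * x + 2*x + e \<le> pi"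
  proof -
    have "real k * x \<le> real L * x" using kL' pf by (intro mult_right_mono) auto
    then show ?thesis unfolding e_def by (simp add: algebra_simps)
  qed
  have Xpos: "kk*sg*(sg+P) + (n-kk)*sg*(P-S1) + (sg*(P+R-2*S1) + S1*(R-P)) > 0"
    unfolding sg_def S1_def P_def R_def kk_def
    by (rule key_pos) (use pf kx ku kL' in \<open>auto simp: e_def n_def\<close>)
  have sg0: "sg < 0" and S10: "S1 > 0" using key_signs[of e x] pf unfolding sg_def S1_def e_def by auto
  have "n*sg - 2*S1 < 0" using sg0 S10 unfolding n_def by (smt (verit) mult_nonneg_nonpos of_nat_0_le_iff)
  then have "sg*(n*sg - 2*S1) > 0" using sg0 by (simp add: mult_neg_neg)
  then have "c > 0" using X Xpos by (smt (verit) mult.assoc mult_nonpos_nonneg)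
  then show ?thesis unfolding c_def .
qed

fun shoot :: "real \<Rightarrow> (nat \<Rightarrow> real) \<Rightarrow> real \<Rightarrow> real \<Rightarrow> nat \<Rightarrow> real" where
  "shoot \<alpha> d p \<mu> 0 = 0"
| "shoot \<alpha> d p \<mu> (Suc 0) = p"
| "shoot \<alpha> d p \<mu> (Suc (Suc j)) = (\<mu> + (\<Sum>i=1..j. d i) - (\<alpha>-1)*shoot \<alpha> d p \<mu> (Suc j) - \<alpha>*shoot \<alpha> d p \<mu> j)/\<alpha>"

lemma shoot_lin:
  "shoot \<alpha> d p \<mu> j = p*shoot \<alpha> (\<lambda>_. 0) 1 0 j + \<mu>*shoot \<alpha> (\<lambda>_. 0) 0 1 j + shoot \<alpha> d 0 0 j"
proof (induction \<alpha> d p \<mu> j rule: shoot.induct)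
  case (3 \<alpha> d p \<mu> j)
  show ?case by (simp only: shoot.simps 3) (simp add: field_simps add_divide_distrib diff_divide_distrib)
qed auto

lemma shoot_m:
  assumes "\<alpha> \<noteq> 0"
  shows "\<alpha>*shoot \<alpha> d p \<mu> (Suc j + 1) + (\<alpha>-1)*shoot \<alpha> d p \<mu> (Suc j) + \<alpha>*shoot \<alpha> d p \<mu> (Suc j - 1) = \<mu> + (\<Sum>i=1..j. d i)"
  using assms by (simp add: field_simps)

lemma shoot_HS_eqs:
  assumes "\<alpha> \<noteq> 0"
  shows "\<forall>j\<in>{1..L}. d j = - \<alpha> * shoot \<alpha> d p \<mu> (j - 1) + shoot \<alpha> d p \<mu> j - shoot \<alpha> d p \<mu> (j + 1) + \<alpha> * shoot \<alpha> d p \<mu> (j + 2)"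
proof
  fix j assume "j \<in> {1..L}"
  then obtain i where i: "j = Suc i" by (cases j) auto
  have m1: "\<alpha>*shoot \<alpha> d p \<mu> (Suc (Suc i) + 1) + (\<alpha>-1)*shoot \<alpha> d p \<mu> (Suc (Suc i)) + \<alpha>*shoot \<alpha> d p \<mu> (Suc (Suc i) - 1) = \<mu> + (\<Sum>i=1..Suc i. d i)"
    using shoot_m[OF assms, of d p \<mu> "Suc i"] .
  have m0: "\<alpha>*shoot \<alpha> d p \<mu> (Suc i + 1) + (\<alpha>-1)*shoot \<alpha> d p \<mu> (Suc i) + \<alpha>*shoot \<alpha> d p \<mu> (Suc i - 1) = \<mu> + (\<Sum>i=1..i. d i)"
    using shoot_m[OF assms, of d p \<mu> i] .
  have ss: "(\<Sum>i=1..Suc i. d i) = (\<Sum>i=1..i. d i) + d (Suc i)" by simp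
  have idx: "Suc i + 1 = Suc (Suc i)" "Suc i - 1 = i" "Suc (Suc i) + 1 = Suc(Suc(Suc i))" "Suc(Suc i) - 1 = Suc i"
     "Suc i + 2 = Suc(Suc(Suc i))" by auto
  have m0': "\<alpha>*shoot \<alpha> d p \<mu> (Suc (Suc i)) + (\<alpha>-1)*shoot \<alpha> d p \<mu> (Suc i) + \<alpha>*shoot \<alpha> d p \<mu> i = \<mu> + (\<Sum>i=1..i. d i)"
    using m0 unfolding idx .
  have m1': "\<alpha>*shoot \<alpha> d p \<mu> (Suc(Suc(Suc i))) + (\<alpha>-1)*shoot \<alpha> d p \<mu> (Suc (Suc i)) + \<alpha>*shoot \<alpha> d p \<mu> (Suc i) = \<mu> + (\<Sum>i=1..i. d i) + d (Suc i)"
    using m1 unfolding idx ss by simp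
  show "d j = - \<alpha> * shoot \<alpha> d p \<mu> (j - 1) + shoot \<alpha> d p \<mu> j - shoot \<alpha> d p \<mu> (j + 1) + \<alpha> * shoot \<alpha> d p \<mu> (j + 2)"
    unfolding i idx using m0' m1' by (simp only: algebra_simps)
qed

lemma shoot_zero: "shoot \<alpha> (\<lambda>_. 0) 0 0 j = 0"
  by (induction \<alpha> "\<lambda>_::nat. 0::real" "0::real" "0::real" j rule: shoot.induct) auto

lemma exist:
  fixes \<alpha> x :: real and L :: nat
  assumes L1: "L \<ge> 1" and a: "\<alpha>*(1+2*cos(2*x)) = 1" and x1: "pi/real(L+3) < x" and x2: "x < pi/real(L+2)"
  shows "\<exists>l. HS \<alpha> L d s l"
proof -
  note pf = par_facts[OF L1 a x1 x2]
  have a0: "\<alpha> \<noteq> 0" using pf by simp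
  define z where "z = (\<lambda>_::nat. 0::real)"
  define U where "U = shoot \<alpha> z 1 0"
  define V where "V = shoot \<alpha> z 0 1"
  define W where "W = shoot \<alpha> d 0 0"
  define a1 where "a1 = U (L+2)"
  define b1 where "b1 = V (L+2)"
  define c1 where "c1 = W (L+2)"
  define a2 where "a2 = (\<Sum>j=1..L+1. U j)"
  define b2 where "b2 = (\<Sum>j=1..L+1. V j)"
  define c2 where "c2 = (\<Sum>j=1..L+1. W j)"
  have lin: "shoot \<alpha> dd p \<mu> = (\<lambda>j. p*shoot \<alpha> z 1 0 j + \<mu>*shoot \<alpha> z 0 1 j + shoot \<alpha> dd 0 0 j)" for dd p \<mu>
    unfolding z_def using shoot_lin by blast
  have F1: "shoot \<alpha> dd p \<mu> (L+2) = p*U (L+2) + \<mu>*V (L+2) + shoot \<alpha> dd 0 0 (L+2)" for dd p \<mu>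
    unfolding U_def V_def by (subst lin) simp
  have F2: "(\<Sum>j=1..L+1. shoot \<alpha> dd p \<mu> j) = p*(\<Sum>j=1..L+1. U j) + \<mu>*(\<Sum>j=1..L+1. V j) + (\<Sum>j=1..L+1. shoot \<alpha> dd 0 0 j)" for dd p \<mu>
    unfolding U_def V_def by (subst lin) (simp only: sum.distrib sum_distrib_left)
  have HSs: "HS \<alpha> L dd (\<Sum>j=1..L+1. shoot \<alpha> dd p \<mu> j) (shoot \<alpha> dd p \<mu>)" if "shoot \<alpha> dd p \<mu> (L+2) = 0" for dd p \<mu>
    unfolding HS_def using that shoot_HS_eqs[OF a0, of L dd p \<mu>] by (auto simp del: shoot.simps simp add: shoot.simps(1))
  have det: "a1*b2 - a2*b1 \<noteq> 0"
  proof
    assume d0: "a1*b2 - a2*b1 = 0"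
    obtain p0 \<mu>0 where pm: "a1*p0 + b1*\<mu>0 = 0" "a2*p0 + b2*\<mu>0 = 0" "p0 \<noteq> 0 \<or> \<mu>0 \<noteq> 0"
    proof (cases "a1 \<noteq> 0 \<or> b1 \<noteq> 0")
      case True
      show ?thesis by (rule that[of b1 "-a1"]) (use True d0 in \<open>auto simp: algebra_simps\<close>)
    next
      case F: False
      show ?thesis
      proof (cases "a2 \<noteq> 0 \<or> b2 \<noteq> 0")
        case True
        show ?thesis by (rule that[of b2 "-a2"]) (use True F d0 in \<open>auto simp: algebra_simps\<close>)
      next
        case False
        show ?thesis by (rule that[of 1 0]) (use False F in auto)
      qed
    qed
    define l where "l = shoot \<alpha> z p0 \<mu>0"
    have W0: "shoot \<alpha> z 0 0 j = 0" for j unfolding z_def by (rule shoot_zero)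
    have "l (L+2) = 0" unfolding l_def using F1[of z p0 \<mu>0] W0 pm unfolding a1_def b1_def by (simp del: shoot.simps add: algebra_simps)
    then have h: "HS \<alpha> L z (\<Sum>j=1..L+1. l j) l" unfolding l_def by (rule HSs)
    have "(\<Sum>j=1..L+1. l j) = 0" unfolding l_def using F2[of z p0 \<mu>0] W0 pm unfolding a2_def b2_def by (simp del: shoot.simps add: algebra_simps)
    then have "HS \<alpha> L (\<lambda>_. 0) 0 l" using h unfolding z_def by simp
    then have l0: "\<forall>j\<le>L+2. l j = 0" by (rule uniq0[OF L1 a x1 x2])
    then have "l 1 = 0" "l 2 = 0" by auto
    then have "p0 = 0" "\<mu>0/\<alpha> = 0" unfolding l_def z_def by (simp_all add: numeral_2_eq_2)
    then show False using pm(3) a0 by simp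
  qed
  define D where "D = a1*b2 - a2*b1"
  define p where "p = ((0 - c1)*b2 - (s - c2)*b1)/D"
  define \<mu> where "\<mu> = (a1*(s - c2) - a2*(0 - c1))/D"
  have D0: "D \<noteq> 0" using det unfolding D_def .
  have pD: "p*D = (0 - c1)*b2 - (s - c2)*b1" and \<mu>D: "\<mu>*D = a1*(s - c2) - a2*(0 - c1)"
    using D0 unfolding p_def \<mu>_def by simp_all
  have "(p*a1 + \<mu>*b1 + c1)*D = 0" using pD \<mu>D unfolding D_def by algebra
  then have g1: "p*a1 + \<mu>*b1 + c1 = 0" using D0 by simp
  have "(p*a2 + \<mu>*b2 + c2 - s)*D = 0" using pD \<mu>D unfolding D_def by algebra
  then have g2: "p*a2 + \<mu>*b2 + c2 = s" using D0 by simp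
  have "shoot \<alpha> d p \<mu> (L+2) = 0"
    unfolding F1[of d p \<mu>] using g1 unfolding W_def[symmetric] c1_def[symmetric] a1_def[symmetric] b1_def[symmetric]
    by (simp add: algebra_simps)
  moreover have "(\<Sum>j=1..L+1. shoot \<alpha> d p \<mu> j) = s"
    unfolding F2[of d p \<mu>] using g2 unfolding W_def[symmetric] c2_def[symmetric] a2_def[symmetric] b2_def[symmetric]
    by (simp add: algebra_simps)
  ultimately show ?thesis using HSs by metis
qed

lemma choose_x:
  fixes \<alpha> :: real and L :: nat
  assumes L1: "L \<ge> 1" and lo: "alphaL (L + 1) < \<alpha>" and hi: "L = 1 \<or> \<alpha> < alphaL L"
  shows "\<exists>x. \<alpha>*(1+2*cos(2*x)) = 1 \<and> pi/real(L+3) < x \<and> x < pi/real(L+2)"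
proof -
  define C1 where "C1 = cos(2*pi/real(L+3))"
  have aL1: "alphaL (L+1) = 1/(1+2*C1)" unfolding alphaL_def C1_def by (simp add: add.assoc add.commute)
  have t1: "2*pi/real(L+3) \<le> pi/2" using L1 by (simp add: field_simps)
  have t1': "0 \<le> 2*pi/real(L+3)" by simp
  have C1p: "C1 \<ge> 0" unfolding C1_def by (intro cos_ge_zero) (use t1 t1' pi_gt_zero in linarith)+
  have pos: "1/(1+2*C1) > 0" using C1p by simp
  have ap: "\<alpha> > 0" using lo pos unfolding aL1 by linarith
  have "1/(1+2*C1) < \<alpha>" using lo unfolding aL1 .
  moreover have "0 < 1+2*C1" using C1p by simp
  ultimately have "1 < \<alpha>*(1+2*C1)" by (simp add: divide_less_eq)
  define y where "y = (1-\<alpha>)/(2*\<alpha>)"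
  have yv: "y = (1/\<alpha> - 1)/2" unfolding y_def using ap by (simp add: field_simps)
  have "1/\<alpha> < 1 + 2*C1" using \<open>1 < \<alpha>*(1+2*C1)\<close> ap by (simp add: field_simps)
  then have yC1: "y < C1" unfolding yv by simp
  have "1/\<alpha> > 0" using ap by simp
  then have ylo: "y > -1/2" unfolding yv by simp
  have "C1 \<le> 1" unfolding C1_def by simp
  then have yb: "-1 \<le> y" "y \<le> 1" using yC1 ylo by auto
  define \<omega> where "\<omega> = arccos y"
  have cw: "cos \<omega> = y" unfolding \<omega>_def using yb by simp
  have wb: "0 \<le> \<omega>" "\<omega> \<le> pi" unfolding \<omega>_def using yb arccos_bounded by auto
  have w1: "2*pi/real(L+3) < \<omega>"
  proof -
    have "2*pi/real(L+3) \<le> pi" using t1 pi_gt_zero by linarith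
    moreover have "cos \<omega> < cos (2*pi/real(L+3))" using yC1 cw unfolding C1_def by simp
    ultimately show ?thesis using cos_mono_less_eq[of \<omega> "2*pi/real(L+3)"] wb t1' by simp
  qed
  have w2: "\<omega> < 2*pi/real(L+2)"
  proof (cases "L = 1")
    case True
    have "cos (2*pi/3) < cos \<omega>" using cw ylo cos_120 by simp
    then have "\<omega> < 2*pi/3" using cos_mono_less_eq[of "2*pi/3" \<omega>] wb by simp
    then show ?thesis using True by simp
  next
    case False
    then have L2: "L \<ge> 2" using L1 by simp
    have aLL: "\<alpha> < alphaL L" using hi False by simp
    define C2 where "C2 = cos(2*pi/real(L+2))"
    have aL2: "alphaL L = 1/(1+2*C2)" unfolding alphaL_def C2_def by simp
    have t2: "2*pi/real(L+2) \<le> pi/2" using L2 by (simp add: field_simps)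
    have t2': "0 \<le> 2*pi/real(L+2)" by simp
    have C2p: "C2 \<ge> 0" unfolding C2_def by (intro cos_ge_zero) (use t2 t2' pi_gt_zero in linarith)+
    have "\<alpha> < 1/(1+2*C2)" using aLL unfolding aL2 .
    moreover have "0 < 1+2*C2" using C2p by simp
    ultimately have "\<alpha>*(1+2*C2) < 1" by (simp add: less_divide_eq)
    then have "1 + 2*C2 < 1/\<alpha>" using ap by (simp add: field_simps)
    then have "C2 < y" unfolding yv by simp
    then have "cos (2*pi/real(L+2)) < cos \<omega>" using cw unfolding C2_def by simp
    moreover have "2*pi/real(L+2) \<le> pi" using t2 pi_gt_zero by linarith
    ultimately show ?thesis using cos_mono_less_eq[of "2*pi/real(L+2)" \<omega>] wb t2' by simp
  qed
  define x where "x = \<omega>/2"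
  have "\<alpha>*(1+2*cos(2*x)) = 1" unfolding x_def using cw ap unfolding y_def by (simp add: field_simps)
  moreover have "pi/real(L+3) < x" using w1 unfolding x_def by (simp add: field_simps)
  moreover have "x < pi/real(L+2)" using w2 unfolding x_def by (simp add: field_simps)
  ultimately show ?thesis by blast
qed

lemma uniq_gen:
  fixes \<alpha> x :: real and L :: nat
  assumes L1: "L \<ge> 1" and a: "\<alpha>*(1+2*cos(2*x)) = 1" and x1: "pi/real(L+3) < x" and x2: "x < pi/real(L+2)"
    and h1: "HS \<alpha> L d s l1" and h2: "HS \<alpha> L d s l2"
  shows "\<forall>j\<le>L+2. l1 j = l2 j"
proof -
  have "HS \<alpha> L (\<lambda>j. 1*d j + (-1)*d j) (1*s + (-1)*s) (\<lambda>j. 1*l1 j + (-1)*l2 j)"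
    by (rule HS_lin[OF h1 h2])
  then have "HS \<alpha> L (\<lambda>_. 0) 0 (\<lambda>j. l1 j - l2 j)" by simp
  then show ?thesis using uniq0[OF L1 a x1 x2] by fastforce
qed

theorem mainTheorem9:
  fixes L :: nat and \<alpha> :: real
  assumes "L \<ge> 1"
    and "alphaL (L + 1) < \<alpha>"
    and "L = 1 \<or> \<alpha> < alphaL L"
  shows "\<exists>c :: nat \<Rightarrow> real. (\<forall>k\<in>{1..L}. c k > 0) \<and>
    (\<forall>d :: nat \<Rightarrow> real. \<exists>l. AS \<alpha> L d l \<and>
        (\<forall>l'. AS \<alpha> L d l' \<longrightarrow> (\<forall>j\<le>L + 2. l' j = l j)) \<and>
        - \<alpha> * l L + l (L + 1) = - d0L \<alpha> L - (\<Sum>k = 1..L. c k * d k) \<and>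
        - l 1 + \<alpha> * l 2 = d0L \<alpha> L - (\<Sum>k = 1..L. c (L + 1 - k) * d k))"
proof -
  note L1 = assms(1)
  obtain x where a: "\<alpha>*(1+2*cos(2*x)) = 1" and x1: "pi/real(L+3) < x" and x2: "x < pi/real(L+2)"
    using choose_x[OF assms] by blast
  note ex = exist[OF L1 a x1 x2]
  note un = uniq_gen[OF L1 a x1 x2]
  define sol where "sol = (\<lambda>d. SOME l. HS \<alpha> L d 1 l)"
  have solHS: "HS \<alpha> L d 1 (sol d)" for d unfolding sol_def using ex[of d 1] by (rule someI_ex)
  define l0 where "l0 = sol (\<lambda>_. 0)"
  have hl0: "HS \<alpha> L (\<lambda>_. 0) 1 l0" unfolding l0_def by (rule solHS)
  define e where "e = (\<lambda>k j::nat. if j = k then (1::real) else 0)"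
  define u where "u = (\<lambda>k j. sol (e k) j - l0 j)"
  have hu: "HS \<alpha> L (e k) 0 (u k)" for k
  proof -
    have "HS \<alpha> L (\<lambda>j. 1*e k j + (-1)*0) (1*1 + (-1)*1) (\<lambda>j. 1*sol (e k) j + (-1)*l0 j)"
      by (rule HS_lin[OF solHS hl0])
    then show ?thesis unfolding u_def by simp
  qed
  define c where "c = (\<lambda>k. \<alpha> * u k L - u k (L+1))"
  have cpos': "\<forall>k\<in>{1..L}. c k > 0"
    unfolding c_def using cpos[OF L1 a x1 x2] hu unfolding e_def by blast
  have d0: "d0L \<alpha> L = - l0 1 + \<alpha> * l0 2"
    unfolding d0L_def
  proof (rule the_equality)
    show "\<exists>l. AS \<alpha> L (\<lambda>_. 0) l \<and> - l0 1 + \<alpha> * l0 2 = - l 1 + \<alpha> * l 2"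
      using hl0 unfolding AS_HS by blast
  next
    fix v assume "\<exists>l. AS \<alpha> L (\<lambda>_. 0) l \<and> v = - l 1 + \<alpha> * l 2"
    then obtain l where "HS \<alpha> L (\<lambda>_. 0) 1 l" "v = - l 1 + \<alpha> * l 2" unfolding AS_HS by blast
    then show "v = - l0 1 + \<alpha> * l0 2" using un[OF _ hl0, of l] by auto
  qed
  have rl0: "\<forall>j\<le>L+2. l0 (L+2-j) = l0 j"
  proof -
    have "HS \<alpha> L (\<lambda>j. - 0) 1 (\<lambda>j. l0 (L + 2 - j))" using HS_rev[OF hl0] by simp
    then have "HS \<alpha> L (\<lambda>_. 0) 1 (\<lambda>j. l0 (L + 2 - j))" by simp
    then show ?thesis using un[OF _ hl0] by blast
  qed
  have l0L: "l0 L = l0 2" and l0L1: "l0 (L+1) = l0 1"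
    using rl0[rule_format, of 2] rl0[rule_format, of "L+1"] by auto
  have ru: "u k (L+2-j) = - u (L+1-k) j" if k: "k \<in> {1..L}" and j: "j \<le> L+2" for k j
  proof -
    have A: "HS \<alpha> L (\<lambda>j. - e k (L + 1 - j)) 0 (\<lambda>j. u k (L + 2 - j))" using HS_rev[OF hu[of k]] by simp
    have "HS \<alpha> L (\<lambda>j. (-1)*e (L+1-k) j + 0*e (L+1-k) j) ((-1)*0 + 0*0) (\<lambda>j. (-1)*u (L+1-k) j + 0*u (L+1-k) j)"
      by (rule HS_lin[OF hu hu])
    then have B0: "HS \<alpha> L (\<lambda>j. - e (L+1-k) j) 0 (\<lambda>j. - u (L+1-k) j)" by simp
    have B: "HS \<alpha> L (\<lambda>j. - e k (L + 1 - j)) 0 (\<lambda>j. - u (L+1-k) j)"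
      by (rule HS_cong[OF B0]) (use k in \<open>auto simp: e_def\<close>)
    show ?thesis using un[OF A B] j by blast
  qed
  show ?thesis
  proof (rule exI[of _ c], intro conjI allI)
    show "\<forall>k\<in>{1..L}. c k > 0" by (rule cpos')
  next
    fix d :: "nat \<Rightarrow> real"
    define l where "l = sol d"
    have hl: "HS \<alpha> L d 1 l" unfolding l_def by (rule solHS)
    have hsum: "HS \<alpha> L (\<lambda>j. \<Sum>k\<in>{1..L}. d k * e k j) (\<Sum>k\<in>{1..L}. 0) (\<lambda>j. \<Sum>k\<in>{1..L}. d k * u k j)"
    proof (rule HS_sum)
      show "\<forall>k\<in>{1..L}. HS \<alpha> L (\<lambda>j. d k * e k j) 0 (\<lambda>j. d k * u k j)"
      proof
        fix k
        have "HS \<alpha> L (\<lambda>j. d k * e k j + 0 * e k j) (d k * 0 + 0 * 0) (\<lambda>j. d k * u k j + 0 * u k j)"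
          by (rule HS_lin[OF hu hu])
        then show "HS \<alpha> L (\<lambda>j. d k * e k j) 0 (\<lambda>j. d k * u k j)" by simp
      qed
    qed simp
    have h1: "HS \<alpha> L (\<lambda>j. 1*d j + (-1)*0) (1*1 + (-1)*1) (\<lambda>j. 1*l j + (-1)*l0 j)"
      by (rule HS_lin[OF hl hl0])
    have h2: "HS \<alpha> L (\<lambda>j. 1*(1*d j + (-1)*0) + (-1)*(\<Sum>k\<in>{1..L}. d k * e k j)) (1*(1*1 + (-1)*1) + (-1)*(\<Sum>k\<in>{1..L}. 0::real))
        (\<lambda>j. 1*(1*l j + (-1)*l0 j) + (-1)*(\<Sum>k\<in>{1..L}. d k * u k j))"
      by (rule HS_lin[OF h1 hsum])
    have dsum: "(\<Sum>k\<in>{1..L}. d k * e k j) = d j" if "j \<in> {1..L}" for j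
    proof -
      have "(\<Sum>k\<in>{1..L}. d k * e k j) = (\<Sum>k\<in>{1..L}. if k = j then d k else 0)"
        unfolding e_def by (intro sum.cong) auto
      also have "\<dots> = d j" using that by simp
      finally show ?thesis .
    qed
    have "HS \<alpha> L (\<lambda>_. 0) 0 (\<lambda>j. l j - l0 j - (\<Sum>k\<in>{1..L}. d k * u k j))"
    proof (rule HS_cong)
      show "HS \<alpha> L (\<lambda>j. d j - (\<Sum>k\<in>{1..L}. d k * e k j)) 0 (\<lambda>j. l j - l0 j - (\<Sum>k\<in>{1..L}. d k * u k j))"
        using h2 by simp
      show "\<forall>j\<in>{1..L}. d j - (\<Sum>k\<in>{1..L}. d k * e k j) = 0" using dsum by simp
    qed
    then have lrep: "l j = l0 j + (\<Sum>k\<in>{1..L}. d k * u k j)" if "j \<le> L+2" for j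
      using uniq0[OF L1 a x1 x2] that by fastforce
    show "\<exists>l. AS \<alpha> L d l \<and>
        (\<forall>l'. AS \<alpha> L d l' \<longrightarrow> (\<forall>j\<le>L + 2. l' j = l j)) \<and>
        - \<alpha> * l L + l (L + 1) = - d0L \<alpha> L - (\<Sum>k = 1..L. c k * d k) \<and>
        - l 1 + \<alpha> * l 2 = d0L \<alpha> L - (\<Sum>k = 1..L. c (L + 1 - k) * d k)"
    proof (intro exI conjI)
      show "AS \<alpha> L d l" unfolding AS_HS by (rule hl)
    next
      show "\<forall>l'. AS \<alpha> L d l' \<longrightarrow> (\<forall>j\<le>L + 2. l' j = l j)" using un hl unfolding AS_HS by blast
    next
      have "- \<alpha> * l L + l (L + 1) = (- \<alpha> * l0 L + l0 (L+1)) - (\<Sum>k = 1..L. c k * d k)"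
        using lrep[of L] lrep[of "L+1"] unfolding c_def
        by (simp add: algebra_simps sum_distrib_left sum_subtractf sum.distrib sum_negf)
      then show "- \<alpha> * l L + l (L + 1) = - d0L \<alpha> L - (\<Sum>k = 1..L. c k * d k)"
        unfolding d0 l0L l0L1 by simp
    next
      have cr: "c (L + 1 - k) = - \<alpha> * u k 2 + u k 1" if "k \<in> {1..L}" for k
      proof -
        have "u k (L+2-L) = - u (L+1-k) L" "u k (L+2-(L+1)) = - u (L+1-k) (L+1)"
          using ru[OF that, of L] ru[OF that, of "L+1"] by auto
        then have "u k 2 = - u (L+1-k) L" "u k 1 = - u (L+1-k) (L+1)" by auto
        then show ?thesis unfolding c_def by simp
      qed
      have "(\<Sum>k = 1..L. c (L + 1 - k) * d k) = (\<Sum>k = 1..L. (- \<alpha> * u k 2 + u k 1) * d k)"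
        using cr by (intro sum.cong) auto
      moreover have "- l 1 + \<alpha> * l 2 = (- l0 1 + \<alpha> * l0 2) - (\<Sum>k = 1..L. (- \<alpha> * u k 2 + u k 1) * d k)"
        using lrep[of 1] lrep[of 2]
        by (simp add: algebra_simps sum_distrib_left sum_subtractf sum.distrib sum_negf)
      ultimately show "- l 1 + \<alpha> * l 2 = d0L \<alpha> L - (\<Sum>k = 1..L. c (L + 1 - k) * d k)"
        unfolding d0 by simp
    qed
  qed
qed

end
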